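(* Let $A\in\mathbb{R}^{m\times n}$, $b\in\mathbb{R}^m$ and $\delta\ge 0$, and assume the set $\mathcal{F}=\{x\in\mathbb{R}^n:\|Ax-b\|\le\delta\}$ is nonempty. Consider the zero-norm problem $$\text{(P)}\qquad \min_{x\in\mathbb{R}^n}\{\|x\|_0:\ \|Ax-b\|\le\delta\}$$ and the problem $$\text{(MPEC)}\qquad \min_{x,v\in\mathbb{R}^n}\{\langle e,e-v\rangle:\ \|Ax-b\|\le\delta,\ \langle v,|x|\rangle=0,\ 0\le v\le e\}.$$ Then: (a) every locally optimal solution of (MPEC) has the form $(x^*,e-\operatorname{sign}(|x^*|))$ for some $x^*\in\mathbb{R}^n$; (b) $x^*$ is a locally optimal solution of (P) if and only if $(x^*,e-\operatorname{sign}(|x^*|))$ is a locally optimal solution of (MPEC).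
   Context: $\|\cdot\|$ is the Euclidean norm, $\|x\|_0$ is the number of nonzero components of $x$, $e\in\mathbb{R}^n$ is the vector of all ones, $|x|$ is the componentwise absolute value, $\operatorname{sign}$ is applied componentwise (so $\operatorname{sign}(|x|)_i=1$ if $x_i\neq0$ and $0$ otherwise), and inequalities between vectors are componentwise. *)

theory Defs
  imports "HOL-Analysis.Analysis"
begin

definition l0norm :: "real^'n \<Rightarrow> nat" where
  "l0norm x = card {i. x $ i \<noteq> 0}"

definition vabs :: "real^'n \<Rightarrow> real^'n" where
  "vabs x = (\<chi> i. \<bar>x $ i\<bar>)"

definition vsign :: "real^'n \<Rightarrow> real^'n" where
  "vsign x = (\<chi> i. sgn (x $ i))"

definition ones :: "real^'n" where
  "ones = (\<chi> i. 1)"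

definition loc_min :: "('a::metric_space \<Rightarrow> real) \<Rightarrow> 'a set \<Rightarrow> 'a \<Rightarrow> bool" where
  "loc_min f S z \<longleftrightarrow> z \<in> S \<and> (\<exists>\<epsilon>>0. \<forall>y\<in>S. dist y z < \<epsilon> \<longrightarrow> f z \<le> f y)"

definition feasP :: "real^'n^'m \<Rightarrow> real^'m \<Rightarrow> real \<Rightarrow> (real^'n) set" where
  "feasP A b \<delta> = {x. norm (A *v x - b) \<le> \<delta>}"

definition objMPEC :: "(real^'n) \<times> (real^'n) \<Rightarrow> real" where
  "objMPEC z = ones \<bullet> (ones - snd z)"

definition feasMPEC :: "real^'n^'m \<Rightarrow> real^'m \<Rightarrow> real \<Rightarrow> ((real^'n) \<times> (real^'n)) set" where
  "feasMPEC A b \<delta> = {(x, v). norm (A *v x - b) \<le> \<delta> \<and> v \<bullet> vabs x = 0 \<and>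
      (\<forall>i. 0 \<le> v $ i \<and> v $ i \<le> 1)}"

end

theory Submission
  imports Defs
begin

lemma obj_sum: "objMPEC z = (\<Sum>j\<in>UNIV. 1 - snd z $ j)"
  by (simp add: objMPEC_def inner_vec_def ones_def)

lemma w_comp: "(ones - vsign (vabs x)) $ i = (if x $ i = 0 then 1 else (0::real))"
  by (simp add: ones_def vsign_def vabs_def)

lemma feas_iff:
  "((x,v) \<in> feasMPEC A b \<delta>) \<longleftrightarrow> norm (A *v x - b) \<le> \<delta> \<and> (\<forall>i. v$i * \<bar>x$i\<bar> = 0)
     \<and> (\<forall>i. 0 \<le> v$i \<and> v$i \<le> 1)"
proof -
  have "(\<forall>i. 0 \<le> v$i) \<Longrightarrow> (v \<bullet> vabs x = 0) = (\<forall>i. v$i * \<bar>x$i\<bar> = 0)"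
    unfolding inner_vec_def vabs_def
    by (subst sum_nonneg_eq_0_iff) auto
  then show ?thesis unfolding feasMPEC_def by auto
qed

lemma near:
  fixes x :: "real^'n"
  shows "\<exists>e>0. \<forall>y. dist y x < e \<longrightarrow> (\<forall>i. x$i \<noteq> 0 \<longrightarrow> y$i \<noteq> 0)"
proof -
  define S where "S = insert 1 ((\<lambda>i. \<bar>x$i\<bar>) ` {i. x$i \<noteq> 0})"
  have fin: "finite S" unfolding S_def by simp
  define e where "e = Min S"
  have "e > 0" unfolding e_def using fin by (subst Min_gr_iff) (auto simp: S_def)
  moreover have "\<forall>y. dist y x < e \<longrightarrow> (\<forall>i. x$i \<noteq> 0 \<longrightarrow> y$i \<noteq> 0)"
  proof (intro allI impI notI)
    fix y i assume d: "dist y x < e" and xi: "x$i \<noteq> 0" and yi: "y$i = 0"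
    have "e \<le> \<bar>x$i\<bar>" unfolding e_def using fin xi by (intro Min_le) (auto simp: S_def)
    moreover have "\<bar>(y - x)$i\<bar> \<le> norm (y - x)" by (rule component_le_norm_cart)
    ultimately show False using d yi by (simp add: dist_norm)
  qed
  ultimately show ?thesis by blast
qed

lemma locP:
  assumes "x \<in> feasP A b \<delta>"
  shows "loc_min (\<lambda>y. real (l0norm y)) (feasP A b \<delta>) x"
proof -
  obtain e where e: "e > 0" "\<forall>y. dist y x < e \<longrightarrow> (\<forall>i. x$i \<noteq> 0 \<longrightarrow> y$i \<noteq> 0)"
    using near by blast
  have "\<forall>y\<in>feasP A b \<delta>. dist y x < e \<longrightarrow> real (l0norm x) \<le> real (l0norm y)"
  proof (intro ballI impI)
    fix y assume "dist y x < e"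
    then have "{i. x$i \<noteq> 0} \<subseteq> {i. y$i \<noteq> 0}" using e by blast
    then show "real (l0norm x) \<le> real (l0norm y)"
      unfolding l0norm_def by (simp add: card_mono)
  qed
  then show ?thesis using assms e(1) unfolding loc_min_def by blast
qed

lemma locM:
  assumes "x \<in> feasP A b \<delta>"
  shows "loc_min objMPEC (feasMPEC A b \<delta>) (x, ones - vsign (vabs x))"
proof -
  obtain e where e: "e > 0" "\<forall>y. dist y x < e \<longrightarrow> (\<forall>i. x$i \<noteq> 0 \<longrightarrow> y$i \<noteq> 0)"
    using near by blast
  have mem: "(x, ones - vsign (vabs x)) \<in> feasMPEC A b \<delta>"
    using assms unfolding feas_iff feasP_def by (auto simp: ones_def vsign_def vabs_def)
  have "\<forall>z\<in>feasMPEC A b \<delta>. dist z (x, ones - vsign (vabs x)) < e \<longrightarrow>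
      objMPEC (x, ones - vsign (vabs x)) \<le> objMPEC z"
  proof (intro ballI impI)
    fix z assume zf: "z \<in> feasMPEC A b \<delta>" and dz: "dist z (x, ones - vsign (vabs x)) < e"
    obtain y v where z: "z = (y, v)" by (cases z)
    have "dist y x < e" using dist_fst_le[of z "(x, ones - vsign (vabs x))"] dz z by simp
    then have yn: "\<And>i. x$i \<noteq> 0 \<Longrightarrow> y$i \<noteq> 0" using e by blast
    have F: "\<forall>i. v$i * \<bar>y$i\<bar> = 0" "\<forall>i. 0 \<le> v$i \<and> v$i \<le> 1"
      using zf z feas_iff by blast+
    have "\<And>j. 1 - (ones - vsign (vabs x)) $ j \<le> 1 - v $ j"
    proof -
      fix j show "1 - (ones - vsign (vabs x)) $ j \<le> 1 - v $ j"
      proof (cases "x$j = 0")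
        case True then show ?thesis using F by (simp add: ones_def vsign_def vabs_def)
      next
        case False then have "y$j \<noteq> 0" using yn by blast
        then have "v$j = 0" using F by auto
        then show ?thesis using \<open>x$j \<noteq> 0\<close> by (simp add: ones_def vsign_def vabs_def)
      qed
    qed
    then show "objMPEC (x, ones - vsign (vabs x)) \<le> objMPEC z"
      unfolding obj_sum z by (intro sum_mono) simp
  qed
  then show ?thesis using mem e(1) unfolding loc_min_def by blast
qed

lemma partA:
  assumes "loc_min objMPEC (feasMPEC A b \<delta>) (x, v)"
  shows "v = ones - vsign (vabs x)"
proof -
  obtain e where mem: "(x,v) \<in> feasMPEC A b \<delta>" and e: "e > 0"
    and m: "\<forall>z\<in>feasMPEC A b \<delta>. dist z (x,v) < e \<longrightarrow> objMPEC (x,v) \<le> objMPEC z"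
    using assms unfolding loc_min_def by blast
  have F: "norm (A *v x - b) \<le> \<delta>" "\<forall>i. v$i * \<bar>x$i\<bar> = 0" "\<forall>i. 0 \<le> v$i \<and> v$i \<le> 1"
    using mem feas_iff by blast+
  have "v$i = (ones - vsign (vabs x))$i" for i
  proof (cases "x$i = 0")
    case False then show ?thesis using F by (auto simp: ones_def vsign_def vabs_def)
  next
    case True
    show ?thesis
    proof (rule ccontr)
      assume "v $ i \<noteq> (ones - vsign (vabs x)) $ i"
      then have lt: "v$i < 1" using True F using w_comp[of x i] by (metis F(3) less_eq_real_def)
      define t where "t = min (1 - v$i) (e/2)"
      have t: "t > 0" "t \<le> 1 - v$i" "t < e" using lt e by (auto simp: t_def)
      define v' where "v' = (\<chi> j. if j = i then v$i + t else v$j)"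
      have v'c: "v'$j = (if j = i then v$i + t else v$j)" for j by (simp add: v'_def)
      have mem': "(x, v') \<in> feasMPEC A b \<delta>"
        unfolding feas_iff using F t True by (auto simp: v'c)
      have "norm (v' - v) \<le> (\<Sum>j\<in>UNIV. \<bar>(v' - v)$j\<bar>)" by (rule norm_le_l1_cart)
      also have "\<dots> = (\<Sum>j\<in>UNIV. if j = i then t else 0)"
        using t by (intro sum.cong) (auto simp: v'c)
      also have "\<dots> = t" by simp
      finally have "dist (x, v') (x, v) < e" using t by (simp add: dist_Pair_Pair dist_norm)
      then have "objMPEC (x,v) \<le> objMPEC (x,v')" using m mem' by blast
      moreover have "objMPEC (x,v') = objMPEC (x,v) - t"
      proof -
        have "(\<Sum>j\<in>UNIV. 1 - v'$j) = (\<Sum>j\<in>UNIV. (1 - v$j) - (if j = i then t else 0))"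
          by (intro sum.cong) (auto simp: v'c)
        also have "\<dots> = (\<Sum>j\<in>UNIV. 1 - v$j) - t" by (simp add: sum_subtractf)
        finally show ?thesis unfolding obj_sum by simp
      qed
      ultimately show False using t by simp
    qed
  qed
  then show ?thesis by (simp add: vec_eq_iff)
qed

theorem proposition2p1:
  fixes A :: "real^'n^'m" and b :: "real^'m" and \<delta> :: real
  assumes "\<delta> \<ge> 0"
    and "feasP A b \<delta> \<noteq> {}"
  shows "(\<forall>x v. loc_min objMPEC (feasMPEC A b \<delta>) (x, v) \<longrightarrow> v = ones - vsign (vabs x))
    \<and> (\<forall>x. loc_min (\<lambda>y. real (l0norm y)) (feasP A b \<delta>) x \<longleftrightarrow>
            loc_min objMPEC (feasMPEC A b \<delta>) (x, ones - vsign (vabs x)))"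
proof (intro conjI allI impI iffI)
  fix x v assume "loc_min objMPEC (feasMPEC A b \<delta>) (x, v)"
  then show "v = ones - vsign (vabs x)" by (rule partA)
next
  fix x assume "loc_min (\<lambda>y. real (l0norm y)) (feasP A b \<delta>) x"
  then have "x \<in> feasP A b \<delta>" unfolding loc_min_def by blast
  then show "loc_min objMPEC (feasMPEC A b \<delta>) (x, ones - vsign (vabs x))" by (rule locM)
next
  fix x assume "loc_min objMPEC (feasMPEC A b \<delta>) (x, ones - vsign (vabs x))"
  then have "x \<in> feasP A b \<delta>" unfolding loc_min_def feas_iff feasP_def by blast
  then show "loc_min (\<lambda>y. real (l0norm y)) (feasP A b \<delta>) x" by (rule locP)
qed

end
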